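(* Let $G$ be a finitely generated group with arbitrarily large finite quotients, and let $n$ be a positive integer. Then $G$ has a finite generating set $A$ such that the depth of $G$ with respect to $A$ is at least $n$.
   Context: A group $G$ has arbitrarily large finite quotients if for every integer $m$ there is a surjective homomorphism from $G$ onto a finite group of order at least $m$. For a finite generating set $A$ of $G$, let $d_A$ denote the word metric on $G$ induced by $A$ (equivalently, the path metric in the Cayley graph of $G$ with respect to $A$). The (dead-end) depth of an element $g\in G$ with respect to $A$ is the $d_A$-distance from $g$ to the complement of the closed ball $\{x\in G : d_A(1,x)\le d_A(1,g)\}$, i.e. the distance from $g$ to the nearest element $x$ with $d_A(1,x)>d_A(1,g)$. The depth of $G$ with respect to $A$ is the (possibly infinite) supremum of the depths of all elements of $G$ with respect to $A$. *)

theory Defs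
  imports "HOL-Algebra.Algebra" "HOL-Library.Extended_Nat"
begin

definition word_length :: "('a, 'b) monoid_scheme \<Rightarrow> 'a set \<Rightarrow> 'a \<Rightarrow> nat" where
  "word_length G A g =
     (LEAST k. \<exists>xs. length xs = k \<and> set xs \<subseteq> A \<union> m_inv G ` A
                    \<and> foldr (monoid.mult G) xs (monoid.one G) = g)"

definition word_dist :: "('a, 'b) monoid_scheme \<Rightarrow> 'a set \<Rightarrow> 'a \<Rightarrow> 'a \<Rightarrow> nat" where
  "word_dist G A x y = word_length G A (inv\<^bsub>G\<^esub> x \<otimes>\<^bsub>G\<^esub> y)"

text \<open>Dead-end depth of g: distance from g to the set of elements strictly farther
  from the identity (infinite if there is none).\<close>
definition elem_depth :: "('a, 'b) monoid_scheme \<Rightarrow> 'a set \<Rightarrow> 'a \<Rightarrow> enat" where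
  "elem_depth G A g =
     (INF x \<in> {x \<in> carrier G. word_length G A x > word_length G A g}.
        enat (word_dist G A g x))"

definition group_depth :: "('a, 'b) monoid_scheme \<Rightarrow> 'a set \<Rightarrow> enat" where
  "group_depth G A = (SUP g \<in> carrier G. elem_depth G A g)"

definition finite_gen_set :: "('a, 'b) monoid_scheme \<Rightarrow> 'a set \<Rightarrow> bool" where
  "finite_gen_set G A \<longleftrightarrow> finite A \<and> A \<subseteq> carrier G \<and> generate G A = carrier G"

definition finitely_generated :: "('a, 'b) monoid_scheme \<Rightarrow> bool" where
  "finitely_generated G \<longleftrightarrow> (\<exists>A. finite_gen_set G A)"

text \<open>Every quotient of G is isomorphic to a group
  with carrier of type 'a set (namely G Mod N), so quantifying over target groups
  of type 'a set monoid loses nothing.\<close>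
definition arb_large_finite_quotients :: "('a, 'b) monoid_scheme \<Rightarrow> bool" where
  "arb_large_finite_quotients G \<longleftrightarrow>
     (\<forall>m::nat. \<exists>(H :: 'a set monoid) h. group H \<and> h \<in> hom G H \<and> h ` carrier G = carrier H
        \<and> finite (carrier H) \<and> card (carrier H) \<ge> m)"

end

theory Submission
  imports Defs
begin

definition wprods :: "('a,'b) monoid_scheme \<Rightarrow> 'a set \<Rightarrow> nat \<Rightarrow> 'a set" where
  "wprods G U k = {foldr (\<otimes>\<^bsub>G\<^esub>) xs \<one>\<^bsub>G\<^esub> | xs. length xs = k \<and> set xs \<subseteq> U}"

lemma wprodsI: "length xs = k \<Longrightarrow> set xs \<subseteq> U \<Longrightarrow> foldr (\<otimes>\<^bsub>G\<^esub>) xs \<one>\<^bsub>G\<^esub> \<in> wprods G U k"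
  unfolding wprods_def by blast

lemma (in monoid) foldr_closed: "set xs \<subseteq> carrier G \<Longrightarrow> foldr (\<otimes>) xs \<one> \<in> carrier G"
  by (induction xs) auto

lemma (in monoid) foldr_app_mult:
  "set xs \<subseteq> carrier G \<Longrightarrow> set ys \<subseteq> carrier G \<Longrightarrow>
   foldr (\<otimes>) (xs@ys) \<one> = foldr (\<otimes>) xs \<one> \<otimes> foldr (\<otimes>) ys \<one>"
  by (induction xs) (auto simp: m_assoc foldr_closed)

lemma (in monoid) wprods_sub: "U \<subseteq> carrier G \<Longrightarrow> wprods G U k \<subseteq> carrier G"
  unfolding wprods_def using foldr_closed by blast

lemma (in monoid) wprods_mult:
  assumes "U \<subseteq> carrier G" "x \<in> wprods G U a" "y \<in> wprods G U b"
  shows "x \<otimes> y \<in> wprods G U (a+b)"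
proof -
  obtain xs where xs: "x = foldr (\<otimes>) xs \<one>" "length xs = a" "set xs \<subseteq> U"
    using assms(2) unfolding wprods_def by blast
  obtain ys where ys: "y = foldr (\<otimes>) ys \<one>" "length ys = b" "set ys \<subseteq> U"
    using assms(3) unfolding wprods_def by blast
  have "x \<otimes> y = foldr (\<otimes>) (xs@ys) \<one>"
    using foldr_app_mult xs ys assms(1) by auto
  thus ?thesis using wprodsI[of "xs@ys" "a+b" U G] xs ys by simp
qed

lemma (in monoid) wprods_split:
  assumes "U \<subseteq> carrier G" "z \<in> wprods G U (a+b)"
  shows "\<exists>x\<in>wprods G U a. \<exists>y\<in>wprods G U b. z = x \<otimes> y"
proof -
  obtain zs where zs: "z = foldr (\<otimes>) zs \<one>" "length zs = a+b" "set zs \<subseteq> U"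
    using assms(2) unfolding wprods_def by blast
  have s1: "set (take a zs) \<subseteq> U" "set (drop a zs) \<subseteq> U"
    using zs(3) set_take_subset set_drop_subset by fast+
  have "z = foldr (\<otimes>) (take a zs) \<one> \<otimes> foldr (\<otimes>) (drop a zs) \<one>"
    using foldr_app_mult[of "take a zs" "drop a zs"] s1 assms(1) zs(1) by auto
  moreover have "foldr (\<otimes>) (take a zs) \<one> \<in> wprods G U a"
    using wprodsI[of "take a zs" a U G] s1 zs(2) by simp
  moreover have "foldr (\<otimes>) (drop a zs) \<one> \<in> wprods G U b"
    using wprodsI[of "drop a zs" b U G] s1 zs(2) by simp
  ultimately show ?thesis by blast
qed

lemma wprods_zero: "wprods G U 0 = {\<one>\<^bsub>G\<^esub>}"
  unfolding wprods_def by auto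

lemma (in monoid) foldr_replicate_one: "foldr (\<otimes>) (replicate k \<one>) \<one> = \<one>"
  by (induction k) (auto simp del: foldr_replicate)

lemma (in monoid) one_wprods: "\<one> \<in> U \<Longrightarrow> \<one> \<in> wprods G U k"
  unfolding wprods_def
  by (rule CollectI, rule exI[of _ "replicate k \<one>"]) (auto simp del: foldr_replicate simp add: foldr_replicate_one)

lemma (in monoid) wprods_mono:
  assumes "U \<subseteq> carrier G" "\<one> \<in> U" "a \<le> b" "x \<in> wprods G U a"
  shows "x \<in> wprods G U b"
proof -
  have "x \<otimes> \<one> \<in> wprods G U (a + (b-a))"
    using wprods_mult[OF assms(1) assms(4) one_wprods[OF assms(2)]] .
  moreover have "x \<in> carrier G" using wprods_sub assms by blast
  ultimately show ?thesis using assms(3) by simp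
qed

lemma (in group) foldr_inv:
  "set xs \<subseteq> carrier G \<Longrightarrow> inv (foldr (\<otimes>) xs \<one>) = foldr (\<otimes>) (rev (map (m_inv G) xs)) \<one>"
proof (induction xs)
  case Nil thus ?case by simp
next
  case (Cons a xs)
  have c: "set (rev (map (m_inv G) xs)) \<subseteq> carrier G" using Cons.prems by auto
  have "inv (foldr (\<otimes>) (a#xs) \<one>) = inv (foldr (\<otimes>) xs \<one>) \<otimes> inv a"
    using Cons.prems foldr_closed by (simp add: inv_mult_group)
  also have "\<dots> = foldr (\<otimes>) (rev (map (m_inv G) xs) @ [inv a]) \<one>"
    using foldr_app_mult[OF c, of "[inv a]"] Cons by auto
  finally show ?case by simp
qed

lemma (in group) wprods_inv:
  assumes "U \<subseteq> carrier G" "\<forall>u\<in>U. inv u \<in> U" "x \<in> wprods G U k"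
  shows "inv x \<in> wprods G U k"
proof -
  obtain xs where xs: "x = foldr (\<otimes>) xs \<one>" "length xs = k" "set xs \<subseteq> U"
    using assms(3) unfolding wprods_def by blast
  have "inv x = foldr (\<otimes>) (rev (map (m_inv G) xs)) \<one>" using foldr_inv xs assms(1) by auto
  moreover have "set (rev (map (m_inv G) xs)) \<subseteq> U" using xs assms(2) by auto
  ultimately show ?thesis using wprodsI[of "rev (map (m_inv G) xs)" k U G] xs by simp
qed

lemma (in monoid) wprods_single: "u \<in> U \<Longrightarrow> u \<in> carrier G \<Longrightarrow> u \<in> wprods G U 1"
  unfolding wprods_def by (rule CollectI, rule exI[of _ "[u]"]) auto

lemma wprods_image: "wprods G U k = (\<lambda>xs. foldr (\<otimes>\<^bsub>G\<^esub>) xs \<one>\<^bsub>G\<^esub>) ` {xs. set xs \<subseteq> U \<and> length xs = k}"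
  unfolding wprods_def by auto

lemma finite_wprods: "finite U \<Longrightarrow> finite (wprods G U k)"
  unfolding wprods_image by (simp add: finite_lists_length_eq)

lemma card_wprods: "finite U \<Longrightarrow> card (wprods G U k) \<le> card U ^ k"
proof -
  assume f: "finite U"
  have "card (wprods G U k) \<le> card {xs. set xs \<subseteq> U \<and> length xs = k}"
    unfolding wprods_image by (rule card_image_le) (simp add: f finite_lists_length_eq)
  also have "\<dots> = card U ^ k" using card_lists_length_eq[OF f] by simp
  finally show ?thesis .
qed

lemma (in monoid) list_wprods:
  assumes "U \<subseteq> carrier G" "set xs \<subseteq> wprods G U R"
  shows "foldr (\<otimes>) xs \<one> \<in> wprods G U (length xs * R)"
  using assms(2)
proof (induction xs)
  case Nil thus ?case by (simp add: wprods_zero)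
next
  case (Cons a xs)
  thus ?case using wprods_mult[OF assms(1), of a R _ "length xs * R"] by simp
qed

lemma hom_foldr:
  assumes "group_hom G H h" "set xs \<subseteq> carrier G"
  shows "h (foldr (\<otimes>\<^bsub>G\<^esub>) xs \<one>\<^bsub>G\<^esub>) = foldr (\<otimes>\<^bsub>H\<^esub>) (map h xs) \<one>\<^bsub>H\<^esub>"
  using assms(2)
proof (induction xs)
  case Nil thus ?case using group_hom.hom_one[OF assms(1)] by simp
next
  case (Cons a xs)
  have "foldr (\<otimes>\<^bsub>G\<^esub>) xs \<one>\<^bsub>G\<^esub> \<in> carrier G"
    using Cons.prems monoid.foldr_closed[of G] assms(1) group_hom.axioms(1) group.is_monoid by fastforce
  thus ?case using Cons group_hom.hom_mult[OF assms(1)] by simp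
qed

lemma hom_wprods:
  assumes "group_hom G H h" "U \<subseteq> carrier G" "x \<in> wprods G U k"
  shows "h x \<in> wprods H (h ` U) k"
proof -
  obtain xs where xs: "x = foldr (\<otimes>\<^bsub>G\<^esub>) xs \<one>\<^bsub>G\<^esub>" "length xs = k" "set xs \<subseteq> U"
    using assms(3) unfolding wprods_def by blast
  have "h x = foldr (\<otimes>\<^bsub>H\<^esub>) (map h xs) \<one>\<^bsub>H\<^esub>" using hom_foldr assms xs by blast
  thus ?thesis using wprodsI[of "map h xs" k "h ` U" H] xs by auto
qed

lemma (in group) generate_wprods:
  assumes "S \<subseteq> carrier G" "S \<subseteq> U" "m_inv G ` S \<subseteq> U" "\<one> \<in> U" "U \<subseteq> carrier G"
    "x \<in> generate G S"
  shows "\<exists>k. x \<in> wprods G U k"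
  using assms(6)
proof (induction rule: generate.induct)
  case one thus ?case using one_wprods assms by blast
next
  case (incl h) thus ?case using wprods_single assms by blast
next
  case (inv h) thus ?case using wprods_single assms by blast
next
  case (eng h1 h2) thus ?case using wprods_mult assms by blast
qed


lemma wprods_set_mono: "U \<subseteq> U' \<Longrightarrow> wprods G U k \<subseteq> wprods G U' k"
  unfolding wprods_def by blast

lemma (in monoid) wprods_one_sub: "U \<subseteq> carrier G \<Longrightarrow> wprods G U 1 \<subseteq> U"
proof
  fix x assume "U \<subseteq> carrier G" "x \<in> wprods G U 1"
  then obtain xs where "x = foldr (\<otimes>) xs \<one>" "length xs = 1" "set xs \<subseteq> U"
    unfolding wprods_def by blast
  then obtain u where "xs = [u]" "u \<in> U" by (metis One_nat_def length_0_conv length_Suc_conv list.set_intros(1) subset_iff)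
  thus "x \<in> U" using \<open>x = _\<close> \<open>U \<subseteq> carrier G\<close> by auto
qed

lemma wl_le:
  assumes "y \<in> wprods G A k"
  shows "word_length G A y \<le> k"
proof -
  obtain xs where xs: "y = foldr (\<otimes>\<^bsub>G\<^esub>) xs \<one>\<^bsub>G\<^esub>" "length xs = k" "set xs \<subseteq> A"
    using assms unfolding wprods_def by blast
  show ?thesis unfolding word_length_def
    by (rule Least_le) (use xs in auto)
qed

lemma word_exists:
  assumes "y \<in> wprods G A k"
  shows "\<exists>xs. length xs = word_length G A y \<and> set xs \<subseteq> A \<union> m_inv G ` A
            \<and> foldr (monoid.mult G) xs (monoid.one G) = y"
proof -
  obtain xs where xs: "y = foldr (\<otimes>\<^bsub>G\<^esub>) xs \<one>\<^bsub>G\<^esub>" "length xs = k" "set xs \<subseteq> A"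
    using assms unfolding wprods_def by blast
  have "\<exists>k xs. length xs = k \<and> set xs \<subseteq> A \<union> m_inv G ` A
            \<and> foldr (monoid.mult G) xs (monoid.one G) = y" using xs by auto
  from LeastI_ex[OF this] show ?thesis unfolding word_length_def by blast
qed

theorem proposition1:
  fixes G :: "('a, 'b) monoid_scheme" and n :: nat
  assumes "group G"
    and "finitely_generated G"
    and "arb_large_finite_quotients G"
    and "n \<ge> 1"
  shows "\<exists>A. finite_gen_set G A \<and> group_depth G A \<ge> enat n"
proof -
  interpret G: group G by fact
  obtain S where S: "finite S" "S \<subseteq> carrier G" "generate G S = carrier G"
    using assms(2) unfolding finitely_generated_def finite_gen_set_def by blast
  define U where "U = S \<union> m_inv G ` S \<union> {\<one>\<^bsub>G\<^esub>}"
  have UG: "U \<subseteq> carrier G" using S unfolding U_def by auto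
  have Ufin: "finite U" using S unfolding U_def by auto
  have U1: "\<one>\<^bsub>G\<^esub> \<in> U" unfolding U_def by auto
  have Uinv: "\<forall>u\<in>U. inv\<^bsub>G\<^esub> u \<in> U" using S unfolding U_def by auto
  have cover: "\<exists>k. x \<in> wprods G U k" if "x \<in> carrier G" for x
    using G.generate_wprods[of S U x] S UG U1 that unfolding U_def by auto
  have "\<exists>(H :: 'a set monoid) h. group H \<and> h \<in> hom G H \<and> h ` carrier G = carrier H
        \<and> finite (carrier H) \<and> card (carrier H) \<ge> card U ^ (n-1) + 1"
    using assms(3) unfolding arb_large_finite_quotients_def by (rule spec)
  then obtain H :: "'a set monoid" and h where H: "group H" "h \<in> hom G H" "h ` carrier G = carrier H"
    "finite (carrier H)" "card (carrier H) \<ge> card U ^ (n-1) + 1"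
    by (elim exE conjE)
  interpret H: group H by fact
  have hom: "group_hom G H h" unfolding group_hom_def group_hom_axioms_def using H(1,2) assms(1) by blast
  interpret hh: group_hom G H h by fact
  define T where "T = h ` U"
  have TH: "T \<subseteq> carrier H" unfolding T_def using UG hh.hom_closed by blast
  have T1: "\<one>\<^bsub>H\<^esub> \<in> T" unfolding T_def by (rule rev_image_eqI[OF U1]) (rule hh.hom_one[symmetric])
  have Tinv: "inv\<^bsub>H\<^esub> t \<in> T" if tT: "t \<in> T" for t
  proof -
    obtain u where "u \<in> U" "t = h u" using tT unfolding T_def by blast
    thus ?thesis using Uinv UG T_def by (metis hh.hom_inv image_eqI subsetD)
  qed
  define V where "V k = wprods H T k" for k
  have VH: "V k \<subseteq> carrier H" for k using H.wprods_sub[OF TH] V_def by auto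
  have Vmono: "a \<le> b \<Longrightarrow> V a \<subseteq> V b" for a b
    using H.wprods_mono[OF TH T1] V_def by auto
  have "\<exists>c0. \<forall>q\<in>carrier H. \<exists>x\<in>wprods G U c0. h x = q"
  proof -
    have ex: "\<exists>k x. x \<in> wprods G U k \<and> h x = q" if qH: "q \<in> carrier H" for q
    proof -
      from qH H(3) obtain x where x: "x \<in> carrier G" "q = h x" by (metis imageE)
      from cover[OF x(1)] obtain k where "x \<in> wprods G U k" by blast
      thus ?thesis using x(2) by blast
    qed
    define f where "f q = (LEAST k. \<exists>x. x \<in> wprods G U k \<and> h x = q)" for q
    have fq: "\<exists>x. x \<in> wprods G U (f q) \<and> h x = q" if "q \<in> carrier H" for q
      unfolding f_def using LeastI_ex[OF ex[OF that]] .
    obtain c0 where c0: "\<forall>k\<in>f ` carrier H. k \<le> c0"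
      using finite_nat_set_iff_bounded_le[THEN iffD1, OF finite_imageI[OF H(4), of f]] by (elim exE)
    have "\<exists>x\<in>wprods G U c0. h x = q" if qH: "q \<in> carrier H" for q
    proof -
      obtain x where x: "x \<in> wprods G U (f q)" "h x = q" using fq[OF qH] by (elim exE conjE)
      have "f q \<le> c0" using c0 qH by blast
      hence "x \<in> wprods G U c0" using G.wprods_mono[OF UG U1 _ x(1)] by blast
      thus ?thesis using x(2) by blast
    qed
    thus ?thesis by blast
  qed
  then obtain c0 where c0: "\<forall>q\<in>carrier H. \<exists>x\<in>wprods G U c0. h x = q" by blast
  have Vc0: "V c0 = carrier H"
  proof
    show "V c0 \<subseteq> carrier H" by (rule VH)
    show "carrier H \<subseteq> V c0"
    proof
      fix q assume "q \<in> carrier H"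
      then obtain x where "x \<in> wprods G U c0" "h x = q" using c0 by blast
      thus "q \<in> V c0" using hom_wprods[OF hom UG] V_def T_def by blast
    qed
  qed
  define D where "D = (LEAST k. V k = carrier H)"
  have VD: "V D = carrier H" unfolding D_def using LeastI[of "\<lambda>k. V k = carrier H", OF Vc0] .
  have nD: "n \<le> D"
  proof (rule ccontr)
    assume "\<not> n \<le> D"
    hence "carrier H \<subseteq> V (n-1)" using VD Vmono[of D "n-1"] by auto
    hence "card (carrier H) \<le> card (V (n-1))"
      using card_mono H.wprods_sub[OF TH] finite_wprods[of T] Ufin T_def V_def by (metis finite_imageI)
    also have "\<dots> \<le> card T ^ (n-1)" using card_wprods[of T] Ufin T_def V_def by auto
    also have "\<dots> \<le> card U ^ (n-1)" using card_image_le[OF Ufin] T_def power_mono by auto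
    finally show False using H(5) by auto
  qed
  have "V (D-1) \<noteq> carrier H" using not_less_Least[of "D-1" "\<lambda>k. V k = carrier H"] nD assms(4)
    unfolding D_def by auto
  then obtain q where q: "q \<in> carrier H" "q \<notin> V (D-1)" using VH by blast
  obtain g where g: "g \<in> wprods G U c0" "h g = q" using c0 q by blast
  have gG: "g \<in> carrier G" using g G.wprods_sub[OF UG] by auto
  define K where "K = 2 * n * c0 + 1"
  define R where "R = K + 2 * c0"
  define A where "A = {a \<in> wprods G U R. h a \<in> T}"
  have AG: "A \<subseteq> carrier G" using G.wprods_sub[OF UG] A_def by auto
  have Afin: "finite A" unfolding A_def by (rule finite_subset[OF _ finite_wprods[OF Ufin, of G R]]) blast
  have UA: "U \<subseteq> A"
  proof
    fix u assume "u \<in> U"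
    hence "u \<in> wprods G U 1" using G.wprods_single UG by auto
    hence "u \<in> wprods G U R" using G.wprods_mono[OF UG U1, of 1 R] R_def K_def by auto
    thus "u \<in> A" using A_def T_def \<open>u \<in> U\<close> by auto
  qed
  have genA: "generate G A = carrier G"
    using G.generate_incl[OF AG] G.mono_generate[of S A] UA S U_def by auto
  have invA: "inv\<^bsub>G\<^esub> a \<in> wprods G U R" if "a \<in> A" for a
    using G.wprods_inv[OF UG Uinv] that A_def by auto
  have key: "\<forall>x e. x \<in> wprods G U (d * K) \<longrightarrow> e \<in> wprods G U c0 \<longrightarrow> h (x \<otimes>\<^bsub>G\<^esub> e) \<in> V d
      \<longrightarrow> x \<otimes>\<^bsub>G\<^esub> e \<in> wprods G A d" if "d \<ge> 1" for d
    using that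
  proof (induction d)
    case 0 thus ?case by simp
  next
    case (Suc d)
    show ?case
    proof (intro allI impI)
      fix x e assume x: "x \<in> wprods G U (Suc d * K)" and e: "e \<in> wprods G U c0"
        and hx: "h (x \<otimes>\<^bsub>G\<^esub> e) \<in> V (Suc d)"
      have xG: "x \<in> carrier G" and eG: "e \<in> carrier G" using x e G.wprods_sub[OF UG] by auto
      show "x \<otimes>\<^bsub>G\<^esub> e \<in> wprods G A (Suc d)"
      proof (cases "d = 0")
        case True
        have "x \<otimes>\<^bsub>G\<^esub> e \<in> wprods G U (K + c0)" using G.wprods_mult[OF UG] x e True by auto
        hence "x \<otimes>\<^bsub>G\<^esub> e \<in> wprods G U R" using G.wprods_mono[OF UG U1, of "K + c0" R] R_def by auto
        moreover have "h (x \<otimes>\<^bsub>G\<^esub> e) \<in> T" using hx True H.wprods_one_sub[OF TH] V_def by auto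
        ultimately have "x \<otimes>\<^bsub>G\<^esub> e \<in> A" using A_def by auto
        thus ?thesis using G.wprods_single AG True by auto
      next
        case False
        have "x \<in> wprods G U (d * K + K)" using x by (simp add: add.commute)
        then obtain x' p where x': "x' \<in> wprods G U (d * K)" and p: "p \<in> wprods G U K"
          and xx: "x = x' \<otimes>\<^bsub>G\<^esub> p" using G.wprods_split[OF UG] by blast
        have x'G: "x' \<in> carrier G" and pG: "p \<in> carrier G" using x' p G.wprods_sub[OF UG] by auto
        have "h (x \<otimes>\<^bsub>G\<^esub> e) \<in> wprods H T (d + 1)" using hx V_def by auto
        then obtain v t where v: "v \<in> V d" and t1: "t \<in> wprods H T 1"
          and vt: "h (x \<otimes>\<^bsub>G\<^esub> e) = v \<otimes>\<^bsub>H\<^esub> t" using H.wprods_split[OF TH] V_def by blast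
        have t: "t \<in> T" using t1 H.wprods_one_sub[OF TH] by auto
        have vH: "v \<in> carrier H" and tH: "t \<in> carrier H" using v VH t TH by auto
        obtain e' where e': "e' \<in> wprods G U c0"
          and he': "h e' = inv\<^bsub>H\<^esub> (h x') \<otimes>\<^bsub>H\<^esub> v"
          using c0 vH x'G by (meson H.inv_closed H.m_closed hh.hom_closed)
        have e'G: "e' \<in> carrier G" using e' G.wprods_sub[OF UG] by auto
        have "h (x' \<otimes>\<^bsub>G\<^esub> e') = h x' \<otimes>\<^bsub>H\<^esub> (inv\<^bsub>H\<^esub> (h x') \<otimes>\<^bsub>H\<^esub> v)"
          using he' x'G e'G by simp
        also have "\<dots> = v" using x'G vH by (simp add: H.m_assoc[symmetric])
        finally have "h (x' \<otimes>\<^bsub>G\<^esub> e') = v" .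
        hence IH: "x' \<otimes>\<^bsub>G\<^esub> e' \<in> wprods G A d"
          using Suc.IH False x' e' v by auto
        define a where "a = inv\<^bsub>G\<^esub> e' \<otimes>\<^bsub>G\<^esub> p \<otimes>\<^bsub>G\<^esub> e"
        have "inv\<^bsub>G\<^esub> e' \<in> wprods G U c0" using G.wprods_inv[OF UG Uinv e'] .
        hence "a \<in> wprods G U (c0 + K + c0)" unfolding a_def
          using G.wprods_mult[OF UG] p e by blast
        hence aR: "a \<in> wprods G U R" unfolding R_def by (simp add: add.commute add.left_commute mult_2)
        have "h a = inv\<^bsub>H\<^esub> (h e') \<otimes>\<^bsub>H\<^esub> h p \<otimes>\<^bsub>H\<^esub> h e"
          unfolding a_def using e'G pG eG by simp
        also have "\<dots> = inv\<^bsub>H\<^esub> v \<otimes>\<^bsub>H\<^esub> (h x' \<otimes>\<^bsub>H\<^esub> h p \<otimes>\<^bsub>H\<^esub> h e)"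
          using he' x'G pG eG vH by (simp add: H.inv_mult_group H.m_assoc)
        also have "h x' \<otimes>\<^bsub>H\<^esub> h p \<otimes>\<^bsub>H\<^esub> h e = v \<otimes>\<^bsub>H\<^esub> t"
          using vt xx x'G pG eG by simp
        also have "inv\<^bsub>H\<^esub> v \<otimes>\<^bsub>H\<^esub> (v \<otimes>\<^bsub>H\<^esub> t) = t"
          using vH tH by (simp add: H.m_assoc[symmetric])
        finally have "h a \<in> T" using t by simp
        hence aA: "a \<in> A" using aR A_def by auto
        have "x \<otimes>\<^bsub>G\<^esub> e = (x' \<otimes>\<^bsub>G\<^esub> e') \<otimes>\<^bsub>G\<^esub> a"
        proof -
          have ee: "e' \<otimes>\<^bsub>G\<^esub> (inv\<^bsub>G\<^esub> e' \<otimes>\<^bsub>G\<^esub> (p \<otimes>\<^bsub>G\<^esub> e)) = p \<otimes>\<^bsub>G\<^esub> e"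
            using e'G pG eG by (simp add: G.m_assoc[symmetric])
          show ?thesis unfolding a_def xx using x'G e'G pG eG ee by (simp add: G.m_assoc)
        qed
        moreover have "a \<in> wprods G A 1" using G.wprods_single aA AG by auto
        ultimately show ?thesis using G.wprods_mult[OF AG IH, of a 1] by simp
      qed
    qed
  qed
  have upper: "word_length G A x \<le> D" if "x \<in> wprods G U (D * K)" for x
  proof -
    have xG: "x \<in> carrier G" using that G.wprods_sub[OF UG] by auto
    have "\<one>\<^bsub>G\<^esub> \<in> wprods G U c0" using G.one_wprods[OF U1] .
    moreover have "h (x \<otimes>\<^bsub>G\<^esub> \<one>\<^bsub>G\<^esub>) \<in> V D" using VD xG by simp
    ultimately have "x \<otimes>\<^bsub>G\<^esub> \<one>\<^bsub>G\<^esub> \<in> wprods G A D" using key[of D] nD assms(4) that by auto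
    thus ?thesis using wl_le xG by fastforce
  qed
  have repr: "\<exists>xs. length xs = word_length G A y \<and> set xs \<subseteq> A \<union> m_inv G ` A
            \<and> foldr (monoid.mult G) xs (monoid.one G) = y" if yG: "y \<in> carrier G" for y
  proof -
    obtain k where "y \<in> wprods G U k" using cover yG by blast
    hence "y \<in> wprods G A k" using wprods_set_mono[OF UA] by blast
    thus ?thesis by (rule word_exists)
  qed
  have hAT: "h ` (A \<union> m_inv G ` A) \<subseteq> T"
  proof
    fix y assume "y \<in> h ` (A \<union> m_inv G ` A)"
    then obtain a where a: "a \<in> A" "y = h a \<or> y = h (inv\<^bsub>G\<^esub> a)" by blast
    have "h a \<in> T" using a A_def by auto
    moreover have "h (inv\<^bsub>G\<^esub> a) = inv\<^bsub>H\<^esub> (h a)" using a AG by auto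
    ultimately show "y \<in> T" using a Tinv by auto
  qed
  have lower: "D \<le> word_length G A g"
  proof (rule ccontr)
    assume "\<not> D \<le> word_length G A g"
    obtain xs where xs: "length xs = word_length G A g" "set xs \<subseteq> A \<union> m_inv G ` A"
      "foldr (monoid.mult G) xs (monoid.one G) = g" using repr gG by blast
    have "A \<union> m_inv G ` A \<subseteq> carrier G" using AG by auto
    hence "h g \<in> wprods H (h ` (A \<union> m_inv G ` A)) (word_length G A g)"
      using hom_wprods[OF hom, of "A \<union> m_inv G ` A" g] xs wprodsI[of xs _ "A \<union> m_inv G ` A" G]
      by auto
    hence "h g \<in> V (word_length G A g)" using wprods_set_mono[OF hAT] V_def by blast
    moreover have "word_length G A g \<le> D - 1" using \<open>\<not> D \<le> _\<close> by linarith
    ultimately have "h g \<in> V (D-1)" using Vmono[of "word_length G A g" "D-1"] by blast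
    thus False using q g by auto
  qed
  have depth: "enat n \<le> elem_depth G A g"
    unfolding elem_depth_def
  proof (rule INF_greatest)
    fix x assume "x \<in> {x \<in> carrier G. word_length G A x > word_length G A g}"
    hence xG: "x \<in> carrier G" and xl: "word_length G A x > word_length G A g" by auto
    show "enat n \<le> enat (word_dist G A g x)"
    proof (rule ccontr)
      assume "\<not> enat n \<le> enat (word_dist G A g x)"
      hence lt: "word_dist G A g x < n" by auto
      define y where "y = inv\<^bsub>G\<^esub> g \<otimes>\<^bsub>G\<^esub> x"
      have yG: "y \<in> carrier G" using gG xG y_def by auto
      obtain ys where ys: "length ys = word_length G A y" "set ys \<subseteq> A \<union> m_inv G ` A"
        "foldr (monoid.mult G) ys (monoid.one G) = y" using repr yG by blast
      have "set ys \<subseteq> wprods G U R" using ys(2) invA A_def by auto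
      hence "y \<in> wprods G U (length ys * R)" using G.list_wprods[OF UG] ys(3) by auto
      hence "g \<otimes>\<^bsub>G\<^esub> y \<in> wprods G U (c0 + length ys * R)" using G.wprods_mult[OF UG g(1)] by auto
      moreover have "g \<otimes>\<^bsub>G\<^esub> y = x" using y_def gG xG by (simp add: G.m_assoc[symmetric])
      moreover have "c0 + length ys * R \<le> D * K"
      proof -
        have "length ys < n" using ys(1) lt unfolding y_def word_dist_def by simp
        hence l: "length ys \<le> n - 1" by linarith
        obtain m where m: "n = Suc m" using assms(4) by (cases n) auto
        have "c0 + length ys * R \<le> c0 + m * R" using l m by auto
        also have "\<dots> \<le> n * K" unfolding R_def K_def m by (simp add: algebra_simps)
        also have "\<dots> \<le> D * K" using nD by auto
        finally show ?thesis .
      qed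
      ultimately have "x \<in> wprods G U (D * K)" using G.wprods_mono[OF UG U1] by blast
      hence "word_length G A x \<le> D" by (rule upper)
      thus False using lower xl by auto
    qed
  qed
  have "elem_depth G A g \<le> group_depth G A"
    unfolding group_depth_def using gG by (rule SUP_upper)
  hence "group_depth G A \<ge> enat n" using depth by auto
  moreover have "finite_gen_set G A" unfolding finite_gen_set_def using Afin AG genA by auto
  ultimately show ?thesis by blast
qed

end
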